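(* Let $V$ be a filled sparsity pattern, $X\in\mathbb S^n_V$ positive definite with $X=LDL^T$, and $S=\mathcal P(X^{-1})$. For each $j$ with $I_j\neq\emptyset$ let $R_j$ be an upper triangular matrix with $S_{I_jI_j}=R_jR_j^T$. Define the Hessian map $\mathcal H:\mathbb S^n_V\to\mathbb S^n_V$, $\mathcal H(Y)=\mathcal P(X^{-1}YX^{-1})$, and the linear map $\mathcal R:\mathbb S^n_V\to\mathbb S^n_V$ as follows: for $Y\in\mathbb S^n_V$ let $L',D'$ be the derivatives at $t=0$ of the factors $L(t),D(t)$ in $X+tY=L(t)D(t)L(t)^T$ ($L(t)$ unit lower triangular, $D(t)$ positive diagonal), and let $W=\mathcal R(Y)\in\mathbb S^n_V$ be given by $$W_{jj}=\frac{D'_{jj}}{D_{jj}},\qquad W_{I_j j}=D_{jj}^{1/2}R_j^TL'_{I_j j}\quad(j=1,\dots,n).$$ Then for all $Y,Z\in\mathbb S^n_V$, $$\operatorname{tr}(X^{-1}YX^{-1}Z)=\operatorname{tr}\big(\mathcal R(Y)\,\mathcal R(Z)\big),$$ i.e., $\mathcal H=\mathcal R^{\mathrm{adj}}\circ\mathcal R$ where the adjoint is with respect to the trace inner product on $\mathbb S^n_V$.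
   Context: A symmetric sparsity pattern $V$ is a set of pairs $(i,j)$ with $1\le j\le i\le n$ containing all $(i,i)$; it is filled (chordal) if $i>j>k$, $(i,k)\in V$, $(j,k)\in V$ imply $(i,j)\in V$. $\mathbb S^n_V$ is the set of real symmetric $n\times n$ matrices with $X_{ij}=X_{ji}=0$ whenever $i\ge j$ and $(i,j)\notin V$, with inner product $A\bullet B=\operatorname{tr}(AB)$. $\mathcal P$ is the projection onto $\mathbb S^n_V$: $\mathcal P(A)_{ij}=A_{ij}$ if $(\max(i,j),\min(i,j))\in V$ and $0$ otherwise. For each $j$, $I_j=\{i>j:(i,j)\in V\}$ (sorted increasingly). $A_{IJ}$ is the submatrix with rows $I$ and columns $J$; $A_{Ij}$ the part of column $j$ with rows in $I$. It is known that the Cholesky factor of a positive definite matrix in $\mathbb S^n_V$ has no nonzeros outside $V$, so $L'_{ij}=0$ for $i>j$, $i\notin I_j$. *)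

theory Defs
  imports "HOL-Analysis.Analysis" "Jordan_Normal_Form.Matrix"
begin

(* Matrices are n x n real matrices of Jordan_Normal_Form; indices are 0-based (0..n-1). *)

definition sparsity_pattern :: "nat \<Rightarrow> (nat \<times> nat) set \<Rightarrow> bool" where
  "sparsity_pattern n V \<longleftrightarrow> V \<subseteq> {(i,j). j \<le> i \<and> i < n} \<and> (\<forall>i<n. (i,i) \<in> V)"

definition filled :: "(nat \<times> nat) set \<Rightarrow> bool" where
  "filled V \<longleftrightarrow> (\<forall>i j k. i > j \<and> j > k \<and> (i,k) \<in> V \<and> (j,k) \<in> V \<longrightarrow> (i,j) \<in> V)"

definition in_SV :: "nat \<Rightarrow> (nat \<times> nat) set \<Rightarrow> real mat \<Rightarrow> bool" where
  "in_SV n V A \<longleftrightarrow> A \<in> carrier_mat n n \<and> transpose_mat A = A \<and>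
     (\<forall>i<n. \<forall>j\<le>i. (i,j) \<notin> V \<longrightarrow> A $$ (i,j) = 0)"

definition proj_SV :: "nat \<Rightarrow> (nat \<times> nat) set \<Rightarrow> real mat \<Rightarrow> real mat" where
  "proj_SV n V A = mat n n (\<lambda>(i,j). if (max i j, min i j) \<in> V then A $$ (i,j) else 0)"

definition pos_def :: "nat \<Rightarrow> real mat \<Rightarrow> bool" where
  "pos_def n A \<longleftrightarrow> A \<in> carrier_mat n n \<and> transpose_mat A = A \<and>
     (\<forall>v \<in> carrier_vec n. v \<noteq> 0\<^sub>v n \<longrightarrow> v \<bullet> (A *\<^sub>v v) > 0)"

definition mat_inv :: "nat \<Rightarrow> real mat \<Rightarrow> real mat" where
  "mat_inv n A = (THE B. B \<in> carrier_mat n n \<and> A * B = 1\<^sub>m n \<and> B * A = 1\<^sub>m n)"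

definition mtrace :: "real mat \<Rightarrow> real" where
  "mtrace A = (\<Sum>i<dim_row A. A $$ (i,i))"

definition unit_lower_tri :: "nat \<Rightarrow> real mat \<Rightarrow> bool" where
  "unit_lower_tri n L \<longleftrightarrow> L \<in> carrier_mat n n \<and>
     (\<forall>i<n. L $$ (i,i) = 1 \<and> (\<forall>j<n. i < j \<longrightarrow> L $$ (i,j) = 0))"

definition pos_diag :: "nat \<Rightarrow> real mat \<Rightarrow> bool" where
  "pos_diag n D \<longleftrightarrow> D \<in> carrier_mat n n \<and>
     (\<forall>i<n. D $$ (i,i) > 0 \<and> (\<forall>j<n. i \<noteq> j \<longrightarrow> D $$ (i,j) = 0))"

definition is_ldl :: "nat \<Rightarrow> real mat \<Rightarrow> real mat \<Rightarrow> real mat \<Rightarrow> bool" where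
  "is_ldl n A L D \<longleftrightarrow> unit_lower_tri n L \<and> pos_diag n D \<and> A = L * D * transpose_mat L"

definition ldl_L :: "nat \<Rightarrow> real mat \<Rightarrow> real mat" where
  "ldl_L n A = (THE L. \<exists>D. is_ldl n A L D)"

definition ldl_D :: "nat \<Rightarrow> real mat \<Rightarrow> real mat" where
  "ldl_D n A = (THE D. \<exists>L. is_ldl n A L D)"

definition Iset :: "(nat \<times> nat) set \<Rightarrow> nat \<Rightarrow> nat set" where
  "Iset V j = {i. i > j \<and> (i,j) \<in> V}"

definition idx :: "nat set \<Rightarrow> nat \<Rightarrow> nat" where
  "idx I k = sorted_list_of_set I ! k"

(* position (0-based) of i within I sorted increasingly *)
definition pos :: "nat set \<Rightarrow> nat \<Rightarrow> nat" where
  "pos I i = card {k \<in> I. k < i}"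

definition submat :: "real mat \<Rightarrow> nat set \<Rightarrow> real mat" where
  "submat A I = mat (card I) (card I) (\<lambda>(a,b). A $$ (idx I a, idx I b))"

definition dL :: "nat \<Rightarrow> real mat \<Rightarrow> real mat \<Rightarrow> nat \<Rightarrow> nat \<Rightarrow> real" where
  "dL n X Y i j = deriv (\<lambda>t. ldl_L n (X + t \<cdot>\<^sub>m Y) $$ (i,j)) 0"

definition dD :: "nat \<Rightarrow> real mat \<Rightarrow> real mat \<Rightarrow> nat \<Rightarrow> real" where
  "dD n X Y j = deriv (\<lambda>t. ldl_D n (X + t \<cdot>\<^sub>m Y) $$ (j,j)) 0"

definition Wcol :: "nat \<Rightarrow> (nat \<times> nat) set \<Rightarrow> real mat \<Rightarrow> real mat \<Rightarrow> (nat \<Rightarrow> real mat)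
    \<Rightarrow> real mat \<Rightarrow> nat \<Rightarrow> real vec" where
  "Wcol n V X D R Y j =
     sqrt (D $$ (j,j)) \<cdot>\<^sub>v (transpose_mat (R j) *\<^sub>v
        vec (card (Iset V j)) (\<lambda>a. dL n X Y (idx (Iset V j) a) j))"

definition Rmap :: "nat \<Rightarrow> (nat \<times> nat) set \<Rightarrow> real mat \<Rightarrow> real mat \<Rightarrow> (nat \<Rightarrow> real mat)
    \<Rightarrow> real mat \<Rightarrow> real mat" where
  "Rmap n V X D R Y = mat n n (\<lambda>(i,j).
     if i = j then dD n X Y j / D $$ (j,j)
     else if j < i \<and> i \<in> Iset V j then Wcol n V X D R Y j $ pos (Iset V j) i
     else if i < j \<and> j \<in> Iset V i then Wcol n V X D R Y i $ pos (Iset V i) j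
     else 0)"

end

theory Submission
  imports Defs "Jordan_Normal_Form.Determinant"
begin

function ld :: "(nat \<Rightarrow> nat \<Rightarrow> real) \<Rightarrow> nat \<Rightarrow> nat \<Rightarrow> real" where
  "ld a i j = (if i < j then 0 else if i = j then a j j - (\<Sum>k<j. (ld a j k)^2 * ld a k k)
     else (a i j - (\<Sum>k<j. ld a i k * ld a j k * ld a k k)) / ld a j j)"
  by pat_completeness auto
termination by (relation "measures [\<lambda>(a,i,j). j, \<lambda>(a,i,j). i]") auto

declare ld.simps[simp del]

lemma ld_diag: "ld a j j = a j j - (\<Sum>k<j. (ld a j k)^2 * ld a k k)"
  by (subst ld.simps) simp

lemma ld_off: "j < i \<Longrightarrow> ld a i j = (a i j - (\<Sum>k<j. ld a i k * ld a j k * ld a k k)) / ld a j j"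
  by (subst ld.simps) simp

lemma ld_unique:
  fixes l :: "nat \<Rightarrow> nat \<Rightarrow> real" and d :: "nat \<Rightarrow> real"
  assumes l1: "\<And>i. i < n \<Longrightarrow> l i i = 1"
    and l0: "\<And>i j. i < j \<Longrightarrow> j < n \<Longrightarrow> l i j = 0"
    and dnz: "\<And>j. j < n \<Longrightarrow> d j \<noteq> 0"
    and eq: "\<And>i j. i < n \<Longrightarrow> j < n \<Longrightarrow> a i j = (\<Sum>k<n. l i k * d k * l j k)"
  shows "j \<le> i \<Longrightarrow> i < n \<Longrightarrow> ld a i j = (if i = j then d j else l i j)"
proof (induction j arbitrary: i rule: less_induct)
  case (less j)
  have jn: "j < n" using less by auto
  have split: "a i j = (\<Sum>k<j. l i k * d k * l j k) + l i j * d j" if "i < n" for i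
  proof -
    have "a i j = (\<Sum>k<n. l i k * d k * l j k)" using eq that jn by auto
    also have "\<dots> = (\<Sum>k\<in>{..<Suc j}. l i k * d k * l j k)"
    proof (rule sum.mono_neutral_right)
      show "\<forall>k\<in>{..<n} - {..<Suc j}. l i k * d k * l j k = 0" using l0 by auto
    qed (use jn in auto)
    also have "\<dots> = (\<Sum>k<j. l i k * d k * l j k) + l i j * d j"
      using l1 jn by simp
    finally show ?thesis .
  qed
  have IH: "\<And>k m. k < j \<Longrightarrow> k \<le> m \<Longrightarrow> m < n \<Longrightarrow> ld a m k = (if m = k then d k else l m k)"
    using less.IH by blast
  have sums: "(\<Sum>k<j. l i k * d k * l j k) = (\<Sum>k<j. ld a i k * ld a j k * ld a k k)"
    if "j \<le> i" "i < n" for i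
    by (rule sum.cong) (use IH that jn in auto)
  have diag: "ld a j j = d j"
  proof -
    have "(\<Sum>k<j. (ld a j k)^2 * ld a k k) = (\<Sum>k<j. ld a j k * ld a j k * ld a k k)"
      by (simp add: power2_eq_square)
    then show ?thesis using ld_diag[of a j] split[OF jn] sums[of j] l1 jn by simp
  qed
  show ?case
  proof (cases "i = j")
    case True
    then show ?thesis using diag by simp
  next
    case False
    then have ji: "j < i" using less by auto
    have "ld a i j = (a i j - (\<Sum>k<j. ld a i k * ld a j k * ld a k k)) / d j"
      using ld_off[OF ji, of a] diag by simp
    also have "\<dots> = l i j" using split[of i] sums[of i] less dnz[OF jn] ji by simp
    finally show ?thesis using ji by simp
  qed
qed

definition lfun :: "(nat \<Rightarrow> nat \<Rightarrow> real) \<Rightarrow> nat \<Rightarrow> nat \<Rightarrow> real" where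
  "lfun a i j = (if i = j then 1 else if j < i then ld a i j else 0)"

lemma ld_exists:
  assumes sym: "\<And>i j. i < n \<Longrightarrow> j < n \<Longrightarrow> a i j = a j i"
    and dnz: "\<And>j. j < n \<Longrightarrow> ld a j j \<noteq> 0"
    and ij: "i < n" "j < n"
  shows "a i j = (\<Sum>k<n. lfun a i k * ld a k k * lfun a j k)"
proof -
  have main: "a i j = (\<Sum>k<n. lfun a i k * ld a k k * lfun a j k)" if "j \<le> i" "i < n" for i j
  proof -
    have jn: "j < n" using that by auto
    have "(\<Sum>k<n. lfun a i k * ld a k k * lfun a j k) = (\<Sum>k\<in>{..<Suc j}. lfun a i k * ld a k k * lfun a j k)"
    proof (rule sum.mono_neutral_right)
      show "\<forall>k\<in>{..<n} - {..<Suc j}. lfun a i k * ld a k k * lfun a j k = 0" by (auto simp: lfun_def)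
    qed (use jn in auto)
    also have "\<dots> = (\<Sum>k<j. ld a i k * ld a k k * ld a j k) + lfun a i j * ld a j j"
      using that by (simp add: lfun_def)
    finally have e: "(\<Sum>k<n. lfun a i k * ld a k k * lfun a j k) = (\<Sum>k<j. ld a i k * ld a j k * ld a k k) + lfun a i j * ld a j j"
      by (simp add: mult_ac)
    show ?thesis
    proof (cases "i = j")
      case True
      then show ?thesis using e ld_diag[of a j] by (simp add: lfun_def power2_eq_square)
    next
      case False
      then have ji: "j < i" using that by auto
      show ?thesis using e ld_off[OF ji, of a] dnz[OF jn] ji by (simp add: lfun_def)
    qed
  qed
  show ?thesis
  proof (cases "j \<le> i")
    case True then show ?thesis using main ij by auto
  next
    case False
    then have "a j i = (\<Sum>k<n. lfun a j k * ld a k k * lfun a i k)" using main ij by auto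
    then show ?thesis using sym ij by (simp add: mult_ac)
  qed
qed

lemma ld_fill:
  assumes fil: "filled V"
    and az: "\<And>i j. j < i \<Longrightarrow> i < n \<Longrightarrow> (i,j) \<notin> V \<Longrightarrow> a i j = 0"
  shows "j < i \<Longrightarrow> i < n \<Longrightarrow> (i,j) \<notin> V \<Longrightarrow> ld a i j = 0"
proof (induction j arbitrary: i rule: less_induct)
  case (less j)
  have "(\<Sum>k<j. ld a i k * ld a j k * ld a k k) = 0"
  proof (rule sum.neutral, rule ballI)
    fix k assume k: "k \<in> {..<j}"
    show "ld a i k * ld a j k * ld a k k = 0"
    proof (rule ccontr)
      assume "ld a i k * ld a j k * ld a k k \<noteq> 0"
      then have "ld a i k \<noteq> 0" "ld a j k \<noteq> 0" by auto
      note nz = this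
      have kj: "k < j" using k by auto
      have "(i,k) \<in> V"
      proof (rule ccontr)
        assume "(i,k) \<notin> V"
        then have "ld a i k = 0" using less.IH[OF kj, of i] kj less.prems by auto
        then show False using nz by simp
      qed
      moreover have "(j,k) \<in> V"
      proof (rule ccontr)
        assume "(j,k) \<notin> V"
        then have "ld a j k = 0" using less.IH[OF kj, of j] kj less.prems by auto
        then show False using nz by simp
      qed
      ultimately have "(i,j) \<in> V" using fil[unfolded filled_def, rule_format, of j i k] less.prems kj by blast
      then show False using less.prems by auto
    qed
  qed
  then show ?case using ld_off[OF less.prems(1), of a] az less.prems by simp
qed

lemma ldlt_index:
  fixes L D :: "real mat"
  assumes L: "L \<in> carrier_mat n n" and D: "D \<in> carrier_mat n n"
    and Dd: "\<And>i j. i < n \<Longrightarrow> j < n \<Longrightarrow> i \<noteq> j \<Longrightarrow> D $$ (i,j) = 0"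
    and ij: "i < n" "j < n"
  shows "(L * D * transpose_mat L) $$ (i,j) = (\<Sum>k<n. L $$ (i,k) * D $$ (k,k) * L $$ (j,k))"
proof -
  have LD: "(L * D) $$ (i,k) = L $$ (i,k) * D $$ (k,k)" if "k < n" for k
  proof -
    have "(L * D) $$ (i,k) = (\<Sum>m<n. L $$ (i,m) * D $$ (m,k))"
      using L D ij that by (simp add: scalar_prod_def atLeast0LessThan)
    also have "\<dots> = (\<Sum>m<n. if m = k then L $$ (i,k) * D $$ (k,k) else 0)"
      by (rule sum.cong) (use Dd that in auto)
    also have "\<dots> = L $$ (i,k) * D $$ (k,k)" using that by simp
    finally show ?thesis .
  qed
  have "(L * D * transpose_mat L) $$ (i,j) = (\<Sum>k<n. (L * D) $$ (i,k) * L $$ (j,k))"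
    using L D ij by (simp add: scalar_prod_def atLeast0LessThan del: assoc_mult_mat)
  also have "\<dots> = (\<Sum>k<n. L $$ (i,k) * D $$ (k,k) * L $$ (j,k))"
    by (rule sum.cong) (simp_all add: LD)
  finally show ?thesis .
qed

lemma is_ldl_index:
  assumes "is_ldl n A L D" "i < n" "j < n"
  shows "A $$ (i,j) = (\<Sum>k<n. L $$ (i,k) * D $$ (k,k) * L $$ (j,k))"
  using assms ldlt_index[of L n D i j] unfolding is_ldl_def unit_lower_tri_def pos_diag_def by auto

definition Lmat :: "nat \<Rightarrow> (nat \<Rightarrow> nat \<Rightarrow> real) \<Rightarrow> real mat" where
  "Lmat n a = mat n n (\<lambda>(i,j). lfun a i j)"
definition Dmat :: "nat \<Rightarrow> (nat \<Rightarrow> nat \<Rightarrow> real) \<Rightarrow> real mat" where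
  "Dmat n a = mat n n (\<lambda>(i,j). if i = j then ld a j j else 0)"

lemma ldl_char:
  assumes A: "A \<in> carrier_mat n n"
    and Aa: "\<And>i j. i < n \<Longrightarrow> j < n \<Longrightarrow> A $$ (i,j) = a i j"
    and sym: "\<And>i j. i < n \<Longrightarrow> j < n \<Longrightarrow> a i j = a j i"
    and pos: "\<And>j. j < n \<Longrightarrow> ld a j j > 0"
  shows "is_ldl n A (Lmat n a) (Dmat n a)" "ldl_L n A = Lmat n a" "ldl_D n A = Dmat n a"
proof -
  have ex: "is_ldl n A (Lmat n a) (Dmat n a)"
    unfolding is_ldl_def unit_lower_tri_def pos_diag_def
  proof (intro conjI allI impI)
    show "A = Lmat n a * Dmat n a * transpose_mat (Lmat n a)"
    proof (rule eq_matI)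
      fix i j assume ij: "i < dim_row (Lmat n a * Dmat n a * transpose_mat (Lmat n a))"
        "j < dim_col (Lmat n a * Dmat n a * transpose_mat (Lmat n a))"
      then have i: "i < n" and j: "j < n" by (auto simp: Lmat_def)
      have "(Lmat n a * Dmat n a * transpose_mat (Lmat n a)) $$ (i,j)
         = (\<Sum>k<n. Lmat n a $$ (i,k) * Dmat n a $$ (k,k) * Lmat n a $$ (j,k))"
        by (rule ldlt_index) (use i j in \<open>auto simp: Lmat_def Dmat_def\<close>)
      also have "\<dots> = (\<Sum>k<n. lfun a i k * ld a k k * lfun a j k)"
        by (rule sum.cong) (use i j in \<open>auto simp: Lmat_def Dmat_def\<close>)
      also have "\<dots> = a i j"
        by (rule ld_exists[symmetric]) (use sym pos i j in \<open>auto simp: less_le\<close>)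
      finally show "A $$ (i,j) = (Lmat n a * Dmat n a * transpose_mat (Lmat n a)) $$ (i,j)"
        using Aa i j by simp
    qed (use A in \<open>auto simp: Lmat_def\<close>)
  qed (auto simp: Lmat_def Dmat_def lfun_def pos)
  have uniq: "L = Lmat n a \<and> D = Dmat n a" if "is_ldl n A L D" for L D
  proof -
    have LL: "L \<in> carrier_mat n n" and DD: "D \<in> carrier_mat n n" using that
      by (auto simp: is_ldl_def unit_lower_tri_def pos_diag_def)
    have e: "ld a i j = (if i = j then D $$ (j,j) else L $$ (i,j))" if "j \<le> i" "i < n" for i j
    proof (rule ld_unique[where l = "\<lambda>i j. L $$ (i,j)" and d = "\<lambda>j. D $$ (j,j)" and n = n])
      show "\<And>i j. i < n \<Longrightarrow> j < n \<Longrightarrow> a i j = (\<Sum>k<n. L $$ (i, k) * D $$ (k, k) * L $$ (j, k))"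
        using is_ldl_index[OF \<open>is_ldl n A L D\<close>] Aa by simp
    qed (use \<open>is_ldl n A L D\<close> that in \<open>auto simp: is_ldl_def unit_lower_tri_def pos_diag_def\<close>)
    have "L = Lmat n a"
    proof (rule eq_matI)
      fix i j assume "i < dim_row (Lmat n a)" "j < dim_col (Lmat n a)"
      then have i: "i < n" and j: "j < n" by (auto simp: Lmat_def)
      show "L $$ (i,j) = Lmat n a $$ (i,j)"
        using e[of j i] i j \<open>is_ldl n A L D\<close>
        by (auto simp: Lmat_def lfun_def is_ldl_def unit_lower_tri_def)
    qed (use LL in \<open>auto simp: Lmat_def\<close>)
    moreover have "D = Dmat n a"
    proof (rule eq_matI)
      fix i j assume "i < dim_row (Dmat n a)" "j < dim_col (Dmat n a)"
      then have i: "i < n" and j: "j < n" by (auto simp: Dmat_def)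
      show "D $$ (i,j) = Dmat n a $$ (i,j)"
        using e[of j j] i j \<open>is_ldl n A L D\<close>
        by (auto simp: Dmat_def is_ldl_def pos_diag_def)
    qed (use DD in \<open>auto simp: Dmat_def\<close>)
    ultimately show ?thesis by simp
  qed
  show "is_ldl n A (Lmat n a) (Dmat n a)" by (rule ex)
  show "ldl_L n A = Lmat n a" unfolding ldl_L_def
    by (rule the_equality) (use ex uniq in blast)+
  show "ldl_D n A = Dmat n a" unfolding ldl_D_def
    by (rule the_equality) (use ex uniq in blast)+
qed

lemma ld_differentiable:
  fixes x y :: "nat \<Rightarrow> nat \<Rightarrow> real"
  assumes nz: "\<And>k. k \<le> j \<Longrightarrow> ld (\<lambda>i j. x i j + 0 * y i j) k k \<noteq> 0"
  shows "(\<lambda>t. ld (\<lambda>i j. x i j + t * y i j) i j) differentiable (at 0)"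
  using nz
proof (induction j arbitrary: i rule: less_induct)
  case (less j)
  have IH: "\<And>k m. k < j \<Longrightarrow> (\<lambda>t. ld (\<lambda>i j. x i j + t * y i j) m k) differentiable (at 0)"
    using less by auto
  have diagj: "(\<lambda>t. ld (\<lambda>i j. x i j + t * y i j) j j) differentiable (at 0)"
  proof -
    have eq: "(\<lambda>t. ld (\<lambda>i j. x i j + t * y i j) j j) = (\<lambda>t. (x j j + t * y j j) - (\<Sum>k<j. (ld (\<lambda>i j. x i j + t * y i j) j k)^2 * ld (\<lambda>i j. x i j + t * y i j) k k))"
      by (rule ext, rule ld_diag)
    show ?thesis unfolding eq
      by (intro derivative_intros ballI) (auto intro: IH)
  qed
  consider "i < j" | "i = j" | "j < i" by linarith
  then show ?case
  proof cases
    case 1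
    then show ?thesis by (subst ld.simps) simp
  next
    case 2
    then show ?thesis using diagj by simp
  next
    case 3
    have eq: "(\<lambda>t. ld (\<lambda>i j. x i j + t * y i j) i j) = (\<lambda>t. ((x i j + t * y i j) - (\<Sum>k<j. ld (\<lambda>i j. x i j + t * y i j) i k * ld (\<lambda>i j. x i j + t * y i j) j k * ld (\<lambda>i j. x i j + t * y i j) k k)) / ld (\<lambda>i j. x i j + t * y i j) j j)"
      using 3 by (intro ext, rule ld_off)
    show ?thesis unfolding eq
      by (intro derivative_intros ballI diagj) (use less.prems[of j] in \<open>auto intro: IH\<close>)
  qed
qed

definition af :: "real mat \<Rightarrow> real mat \<Rightarrow> real \<Rightarrow> nat \<Rightarrow> nat \<Rightarrow> real" where
  "af X Y t = (\<lambda>i j. X $$ (i,j) + t * Y $$ (i,j))"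

lemma in_SV_sym: "in_SV n V A \<Longrightarrow> i < n \<Longrightarrow> j < n \<Longrightarrow> A $$ (i,j) = A $$ (j,i)"
  unfolding in_SV_def by (metis carrier_matD(1,2) index_transpose_mat(1))

lemma in_SV_zero: "in_SV n V A \<Longrightarrow> j < i \<Longrightarrow> i < n \<Longrightarrow> (i,j) \<notin> V \<Longrightarrow> A $$ (i,j) = 0"
  unfolding in_SV_def by auto

context
  fixes n V X Y L D
  assumes fil: "filled V" and XV: "in_SV n V X" and YV: "in_SV n V Y" and ldl: "is_ldl n X L D"
begin

lemma XC: "X \<in> carrier_mat n n" and YC: "Y \<in> carrier_mat n n"
  using XV YV by (auto simp: in_SV_def)

lemma LC: "L \<in> carrier_mat n n" and DC: "D \<in> carrier_mat n n"
  using ldl by (auto simp: is_ldl_def unit_lower_tri_def pos_diag_def)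

lemma Dpos: "k < n \<Longrightarrow> D $$ (k,k) > 0"
  using ldl by (auto simp: is_ldl_def pos_diag_def)

lemma base:
  assumes "j \<le> i" "i < n"
  shows "ld (af X Y 0) i j = (if i = j then D $$ (j,j) else L $$ (i,j))"
proof (rule ld_unique[where l = "\<lambda>i j. L $$ (i,j)" and d = "\<lambda>j. D $$ (j,j)" and n = n])
  show "\<And>i j. i < n \<Longrightarrow> j < n \<Longrightarrow> af X Y 0 i j = (\<Sum>k<n. L $$ (i, k) * D $$ (k, k) * L $$ (j, k))"
    using is_ldl_index[OF ldl] by (simp add: af_def)
qed (use ldl assms in \<open>auto simp: is_ldl_def unit_lower_tri_def pos_diag_def\<close>)

lemma base_D: "k < n \<Longrightarrow> ld (af X Y 0) k k = D $$ (k,k)"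
  using base[of k k] by simp

lemma base_L: "i < n \<Longrightarrow> j < n \<Longrightarrow> lfun (af X Y 0) i j = L $$ (i,j)"
  using base[of j i] ldl by (auto simp: lfun_def is_ldl_def unit_lower_tri_def)

lemma ld_diff: "j < n \<Longrightarrow> (\<lambda>t. ld (af X Y t) i j) differentiable (at 0)"
proof -
  assume j: "j < n"
  have "(\<lambda>t. ld (\<lambda>i j. X $$ (i,j) + t * Y $$ (i,j)) i j) differentiable (at 0)"
  proof (rule ld_differentiable[where x = "\<lambda>i j. X $$ (i,j)" and y = "\<lambda>i j. Y $$ (i,j)"])
    fix k assume "k \<le> j"
    then have "ld (af X Y 0) k k \<noteq> 0" using base_D[of k] Dpos[of k] j by auto
    then show "ld (\<lambda>i j. X $$ (i,j) + 0 * Y $$ (i,j)) k k \<noteq> 0" by (simp add: af_def)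
  qed
  then show ?thesis by (simp add: af_def)
qed

lemma ev_pos: "eventually (\<lambda>t. \<forall>k\<in>{..<n}. ld (af X Y t) k k > 0) (nhds 0)"
proof (rule eventually_ball_finite)
  show "\<forall>k\<in>{..<n}. eventually (\<lambda>t. ld (af X Y t) k k > 0) (nhds 0)"
  proof
    fix k assume k: "k \<in> {..<n}"
    have "continuous (at 0) (\<lambda>t. ld (af X Y t) k k)"
      using ld_diff[of k k] k differentiable_imp_continuous_within by auto
    then have "((\<lambda>t. ld (af X Y t) k k) \<longlongrightarrow> ld (af X Y 0) k k) (at 0)"
      by (simp add: isCont_def)
    moreover have "ld (af X Y 0) k k > 0" using base_D Dpos k by auto
    ultimately have "eventually (\<lambda>t. ld (af X Y t) k k > 0) (at 0)"
      using order_tendstoD(1) by blast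
    then show "eventually (\<lambda>t. ld (af X Y t) k k > 0) (nhds 0)"
      using \<open>ld (af X Y 0) k k > 0\<close> by (simp add: eventually_nhds_conv_at)
  qed
qed simp

lemma afsym: "i < n \<Longrightarrow> j < n \<Longrightarrow> af X Y t i j = af X Y t j i"
  using in_SV_sym[OF XV] in_SV_sym[OF YV] by (simp add: af_def)

lemma ev_ldl: "eventually (\<lambda>t. ldl_L n (X + t \<cdot>\<^sub>m Y) = Lmat n (af X Y t) \<and> ldl_D n (X + t \<cdot>\<^sub>m Y) = Dmat n (af X Y t)) (nhds 0)"
  using ev_pos
proof (rule eventually_mono)
  fix t assume pos: "\<forall>k\<in>{..<n}. ld (af X Y t) k k > 0"
  have A: "X + t \<cdot>\<^sub>m Y \<in> carrier_mat n n" using XC YC by auto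
  have Aa: "\<And>i j. i < n \<Longrightarrow> j < n \<Longrightarrow> (X + t \<cdot>\<^sub>m Y) $$ (i,j) = af X Y t i j"
    using XC YC by (simp add: af_def)
  show "ldl_L n (X + t \<cdot>\<^sub>m Y) = Lmat n (af X Y t) \<and> ldl_D n (X + t \<cdot>\<^sub>m Y) = Dmat n (af X Y t)"
    using ldl_char(2,3)[OF A Aa afsym] pos by auto
qed

lemma ev_pos2: "eventually (\<lambda>t. \<forall>k<n. ld (af X Y t) k k \<noteq> 0) (nhds 0)"
  using ev_pos by (rule eventually_mono) (metis lessThan_iff order_less_irrefl)

lemma dL_eq: "i < n \<Longrightarrow> j < n \<Longrightarrow> dL n X Y i j = deriv (\<lambda>t. lfun (af X Y t) i j) 0"
  unfolding dL_def
  by (rule deriv_cong_ev[OF eventually_mono[OF ev_ldl]]) (auto simp: Lmat_def)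

lemma dD_eq: "j < n \<Longrightarrow> dD n X Y j = deriv (\<lambda>t. ld (af X Y t) j j) 0"
  unfolding dD_def
  by (rule deriv_cong_ev[OF eventually_mono[OF ev_ldl]]) (auto simp: Dmat_def)

lemma lfun_diff: "j < n \<Longrightarrow> (\<lambda>t. lfun (af X Y t) i j) differentiable (at 0)"
  unfolding lfun_def
  by (cases "i = j"; cases "j < i") (auto intro: ld_diff)

lemma DERIV_L: "i < n \<Longrightarrow> j < n \<Longrightarrow> DERIV (\<lambda>t. lfun (af X Y t) i j) 0 :> dL n X Y i j"
  using lfun_diff[of j i] dL_eq[of i j] DERIV_deriv_iff_real_differentiable by metis

lemma DERIV_D: "j < n \<Longrightarrow> DERIV (\<lambda>t. ld (af X Y t) j j) 0 :> dD n X Y j"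
  using ld_diff[of j j] dD_eq[of j] DERIV_deriv_iff_real_differentiable by metis

lemma deriv_identity:
  assumes i: "i < n" and j: "j < n"
  shows "Y $$ (i,j) = (\<Sum>k<n. dL n X Y i k * D $$ (k,k) * L $$ (j,k)
      + L $$ (i,k) * dD n X Y k * L $$ (j,k) + L $$ (i,k) * D $$ (k,k) * dL n X Y j k)"
proof -
  have d1: "DERIV (\<lambda>t. af X Y t i j) 0 :> Y $$ (i,j)"
    unfolding af_def by (auto intro!: derivative_eq_intros)
  have d2: "DERIV (\<lambda>t. \<Sum>k<n. lfun (af X Y t) i k * ld (af X Y t) k k * lfun (af X Y t) j k) 0 :>
     (\<Sum>k<n. dL n X Y i k * D $$ (k,k) * L $$ (j,k)
      + L $$ (i,k) * dD n X Y k * L $$ (j,k) + L $$ (i,k) * D $$ (k,k) * dL n X Y j k)"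
  proof (rule DERIV_sum)
    fix k assume k: "k \<in> {..<n}"
    have "DERIV (\<lambda>t. lfun (af X Y t) i k * ld (af X Y t) k k * lfun (af X Y t) j k) 0 :>
      (dL n X Y i k * ld (af X Y 0) k k + dD n X Y k * lfun (af X Y 0) i k) * lfun (af X Y 0) j k
       + dL n X Y j k * (lfun (af X Y 0) i k * ld (af X Y 0) k k)"
      by (intro DERIV_mult DERIV_L DERIV_D) (use i j k in auto)
    then show "DERIV (\<lambda>t. lfun (af X Y t) i k * ld (af X Y t) k k * lfun (af X Y t) j k) 0 :>
      dL n X Y i k * D $$ (k,k) * L $$ (j,k)
      + L $$ (i,k) * dD n X Y k * L $$ (j,k) + L $$ (i,k) * D $$ (k,k) * dL n X Y j k"
      using base_D[of k] base_L[of i k] base_L[of j k] i j k by (simp add: algebra_simps)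
  qed
  have ev: "eventually (\<lambda>t. af X Y t i j = (\<Sum>k<n. lfun (af X Y t) i k * ld (af X Y t) k k * lfun (af X Y t) j k)) (nhds 0)"
    using ev_pos2 by (rule eventually_mono) (rule ld_exists[OF afsym], auto simp: i j)
  have "DERIV (\<lambda>t. \<Sum>k<n. lfun (af X Y t) i k * ld (af X Y t) k k * lfun (af X Y t) j k) 0 :> Y $$ (i,j)"
    using d1 DERIV_cong_ev[OF refl ev refl] by simp
  then show ?thesis using d2 DERIV_unique by blast
qed

lemma dL_zero:
  assumes i: "i < n" and j: "j < n" and nv: "\<not> (j < i \<and> (i,j) \<in> V)"
  shows "dL n X Y i j = 0"
proof -
  have "eventually (\<lambda>t. lfun (af X Y t) i j = (if i = j then 1 else 0)) (nhds 0)" (is "eventually _ _")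
  proof (cases "j < i")
    case True
    then have "(i,j) \<notin> V" using nv by auto
    have "ld (af X Y t) i j = 0" for t
      by (rule ld_fill[OF fil _ True i \<open>(i,j) \<notin> V\<close>])
         (use in_SV_zero[OF XV] in_SV_zero[OF YV] in \<open>auto simp: af_def\<close>)
    then show ?thesis using True by (simp add: lfun_def)
  next
    case False
    then show ?thesis by (auto simp: lfun_def)
  qed
  then have "DERIV (\<lambda>t. lfun (af X Y t) i j) 0 :> 0 \<longleftrightarrow> DERIV (\<lambda>t. if i = j then 1 else (0::real)) 0 :> 0"
    by (rule DERIV_cong_ev[OF refl _ refl])
  then have "DERIV (\<lambda>t. lfun (af X Y t) i j) 0 :> 0" by simp
  then show ?thesis using DERIV_L[OF i j] DERIV_unique by blast
qed

end

lemma adbt_index: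
  fixes A B D :: "real mat"
  assumes A: "A \<in> carrier_mat n n" and B: "B \<in> carrier_mat n n" and D: "D \<in> carrier_mat n n"
    and Dd: "\<And>i j. i < n \<Longrightarrow> j < n \<Longrightarrow> i \<noteq> j \<Longrightarrow> D $$ (i,j) = 0"
    and ij: "i < n" "j < n"
  shows "(A * D * transpose_mat B) $$ (i,j) = (\<Sum>k<n. A $$ (i,k) * D $$ (k,k) * B $$ (j,k))"
proof -
  have LD: "(A * D) $$ (i,k) = A $$ (i,k) * D $$ (k,k)" if "k < n" for k
  proof -
    have "(A * D) $$ (i,k) = (\<Sum>m<n. A $$ (i,m) * D $$ (m,k))"
      using A D ij that by (simp add: scalar_prod_def atLeast0LessThan)
    also have "\<dots> = (\<Sum>m<n. if m = k then A $$ (i,k) * D $$ (k,k) else 0)"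
      by (rule sum.cong) (use Dd that in auto)
    also have "\<dots> = A $$ (i,k) * D $$ (k,k)" using that by simp
    finally show ?thesis .
  qed
  have "(A * D * transpose_mat B) $$ (i,j) = (\<Sum>k<n. (A * D) $$ (i,k) * B $$ (j,k))"
    using A B D ij by (simp add: scalar_prod_def atLeast0LessThan del: assoc_mult_mat)
  also have "\<dots> = (\<Sum>k<n. A $$ (i,k) * D $$ (k,k) * B $$ (j,k))"
    by (rule sum.cong) (simp_all add: LD)
  finally show ?thesis .
qed

lemma diag_left_index:
  fixes A G :: "real mat"
  assumes A: "A \<in> carrier_mat n n" and G: "G \<in> carrier_mat n n"
    and Gd: "\<And>i j. i < n \<Longrightarrow> j < n \<Longrightarrow> i \<noteq> j \<Longrightarrow> G $$ (i,j) = 0"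
    and ij: "i < n" "j < n"
  shows "(G * A) $$ (i,j) = G $$ (i,i) * A $$ (i,j)"
proof -
  have "(G * A) $$ (i,j) = (\<Sum>m<n. G $$ (i,m) * A $$ (m,j))"
    using A G ij by (simp add: scalar_prod_def atLeast0LessThan)
  also have "\<dots> = (\<Sum>m<n. if m = i then G $$ (i,i) * A $$ (i,j) else 0)"
    by (rule sum.cong) (use Gd ij in auto)
  also have "\<dots> = G $$ (i,i) * A $$ (i,j)" using ij by simp
  finally show ?thesis .
qed

lemma diag_right_index:
  fixes A G :: "real mat"
  assumes A: "A \<in> carrier_mat n n" and G: "G \<in> carrier_mat n n"
    and Gd: "\<And>i j. i < n \<Longrightarrow> j < n \<Longrightarrow> i \<noteq> j \<Longrightarrow> G $$ (i,j) = 0"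
    and ij: "i < n" "j < n"
  shows "(A * G) $$ (i,j) = A $$ (i,j) * G $$ (j,j)"
proof -
  have "(A * G) $$ (i,j) = (\<Sum>m<n. A $$ (i,m) * G $$ (m,j))"
    using A G ij by (simp add: scalar_prod_def atLeast0LessThan)
  also have "\<dots> = (\<Sum>m<n. if m = j then A $$ (i,j) * G $$ (j,j) else 0)"
    by (rule sum.cong) (use Gd ij in auto)
  also have "\<dots> = A $$ (i,j) * G $$ (j,j)" using ij by simp
  finally show ?thesis .
qed

lemma mtrace_comm:
  fixes A B :: "real mat"
  assumes "A \<in> carrier_mat n m" "B \<in> carrier_mat m n"
  shows "mtrace (A * B) = mtrace (B * A)"
proof -
  have "mtrace (A * B) = (\<Sum>i<n. \<Sum>k<m. A $$ (i,k) * B $$ (k,i))"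
    using assms by (simp add: mtrace_def scalar_prod_def atLeast0LessThan)
  also have "\<dots> = (\<Sum>k<m. \<Sum>i<n. B $$ (k,i) * A $$ (i,k))"
    by (subst sum.swap) (simp add: mult.commute)
  also have "\<dots> = mtrace (B * A)"
    using assms by (simp add: mtrace_def scalar_prod_def atLeast0LessThan)
  finally show ?thesis .
qed

lemma inv_exists:
  fixes L :: "real mat"
  assumes "unit_lower_tri n L"
  shows "\<exists>Q \<in> carrier_mat n n. L * Q = 1\<^sub>m n \<and> Q * L = 1\<^sub>m n"
proof -
  have LC: "L \<in> carrier_mat n n" using assms by (simp add: unit_lower_tri_def)
  have "det L = prod_list (diag_mat L)"
    by (rule det_lower_triangular[where n = n]) (use assms in \<open>auto simp: unit_lower_tri_def\<close>)
  also have "\<dots> = 1" using assms LC unfolding prod_list_diag_prod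
    by (simp add: unit_lower_tri_def)
  finally have "det L \<noteq> 0" by simp
  from det_non_zero_imp_unit[OF LC this, of undefined]
  show ?thesis unfolding Units_def ring_mat_simps by auto
qed

lemma Q_lower:
  fixes L Q :: "real mat"
  assumes "unit_lower_tri n L" and QC: "Q \<in> carrier_mat n n" and LQ: "L * Q = 1\<^sub>m n"
  shows "i < j \<Longrightarrow> j < n \<Longrightarrow> Q $$ (i,j) = 0"
proof (induction i arbitrary: j rule: less_induct)
  case (less i)
  have LC: "L \<in> carrier_mat n n" using assms by (simp add: unit_lower_tri_def)
  have in_: "i < n" using less by auto
  have "0 = (L * Q) $$ (i,j)" using LQ less in_ by simp
  also have "\<dots> = (\<Sum>k<n. L $$ (i,k) * Q $$ (k,j))"
    using LC QC less in_ by (simp add: scalar_prod_def atLeast0LessThan)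
  also have "\<dots> = (\<Sum>k\<in>{i}. L $$ (i,k) * Q $$ (k,j))"
  proof (rule sum.mono_neutral_right)
    show "\<forall>k\<in>{..<n} - {i}. L $$ (i,k) * Q $$ (k,j) = 0"
    proof
      fix k assume k: "k \<in> {..<n} - {i}"
      show "L $$ (i,k) * Q $$ (k,j) = 0"
      proof (cases "k < i")
        case True
        then show ?thesis using less.IH[of k j] less by auto
      next
        case False
        then have "i < k" using k by auto
        then show ?thesis using assms(1) k by (auto simp: unit_lower_tri_def)
      qed
    qed
  qed (use in_ in auto)
  also have "\<dots> = Q $$ (i,j)" using assms(1) in_ by (simp add: unit_lower_tri_def)
  finally show ?case by simp
qed

definition dmat :: "nat \<Rightarrow> (nat \<Rightarrow> real) \<Rightarrow> real mat" where
  "dmat n d = mat n n (\<lambda>(i,j). if i = j then d i else 0)"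
definition fmat :: "nat \<Rightarrow> (nat \<Rightarrow> nat \<Rightarrow> real) \<Rightarrow> real mat" where
  "fmat n f = mat n n (\<lambda>(i,j). f i j)"

lemma dmat_carrier[simp]: "dmat n d \<in> carrier_mat n n" by (simp add: dmat_def)
lemma fmat_carrier[simp]: "fmat n f \<in> carrier_mat n n" by (simp add: fmat_def)
lemma fd_dims[simp]: "dim_row (fmat n f) = n" "dim_col (fmat n f) = n" "dim_row (dmat n d) = n" "dim_col (dmat n d) = n"
  by (simp_all add: fmat_def dmat_def)
lemma dmat_index: "i < n \<Longrightarrow> j < n \<Longrightarrow> dmat n d $$ (i,j) = (if i = j then d i else 0)"
  by (simp add: dmat_def)
lemma fmat_index[simp]: "i < n \<Longrightarrow> j < n \<Longrightarrow> fmat n f $$ (i,j) = f i j"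
  by (simp add: fmat_def)

lemma mm_assoc: "A \<in> carrier_mat n n \<Longrightarrow> B \<in> carrier_mat n n \<Longrightarrow> C \<in> carrier_mat n n \<Longrightarrow> A * B * C = A * (B * (C::real mat))"
  by (rule assoc_mult_mat)
lemma mm_carrier: "A \<in> carrier_mat n n \<Longrightarrow> B \<in> carrier_mat n n \<Longrightarrow> A * (B::real mat) \<in> carrier_mat n n"
  by simp
lemma ma_carrier: "A \<in> carrier_mat n n \<Longrightarrow> B \<in> carrier_mat n n \<Longrightarrow> A + (B::real mat) \<in> carrier_mat n n"
  by simp
lemma mm_distL: "A \<in> carrier_mat n n \<Longrightarrow> B \<in> carrier_mat n n \<Longrightarrow> C \<in> carrier_mat n n \<Longrightarrow> A * (B + C) = A * B + A * (C::real mat)"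
  by (rule mult_add_distrib_mat)
lemma mm_distR: "A \<in> carrier_mat n n \<Longrightarrow> B \<in> carrier_mat n n \<Longrightarrow> C \<in> carrier_mat n n \<Longrightarrow> (A + B) * C = A * C + B * (C::real mat)"
  by (rule add_mult_distrib_mat)
lemma ma_assoc: "A \<in> carrier_mat n n \<Longrightarrow> B \<in> carrier_mat n n \<Longrightarrow> C \<in> carrier_mat n n \<Longrightarrow> (A + B) + C = A + (B + (C::real mat))"
  by (rule assoc_add_mat)
lemma mm_one_r: "A \<in> carrier_mat n n \<Longrightarrow> A * 1\<^sub>m n = (A::real mat)" by simp
lemma mm_one_l: "A \<in> carrier_mat n n \<Longrightarrow> 1\<^sub>m n * A = (A::real mat)" by simp

lemma cancel2: "A \<in> carrier_mat n n \<Longrightarrow> B \<in> carrier_mat n n \<Longrightarrow> R \<in> carrier_mat n n \<Longrightarrow> A * B = 1\<^sub>m n \<Longrightarrow> A * (B * R) = (R::real mat)"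
  by (simp flip: mm_assoc)

lemmas mm_simps = mm_assoc mm_carrier ma_carrier mm_distL mm_distR ma_assoc mm_one_r mm_one_l

context
  fixes n :: nat and L D Q :: "real mat"
  assumes Lu: "unit_lower_tri n L" and Dd: "pos_diag n D" and QC[simp]: "Q \<in> carrier_mat n n"
    and LQ: "L * Q = 1\<^sub>m n" and QL: "Q * L = 1\<^sub>m n"
begin

lemma LCe[simp]: "L \<in> carrier_mat n n" using Lu by (simp add: unit_lower_tri_def)
lemma DCe[simp]: "D \<in> carrier_mat n n" using Dd by (simp add: pos_diag_def)
lemma Dp: "k < n \<Longrightarrow> D $$ (k,k) > 0" using Dd by (simp add: pos_diag_def)
lemma Doff: "i < n \<Longrightarrow> j < n \<Longrightarrow> i \<noteq> j \<Longrightarrow> D $$ (i,j) = 0" using Dd by (simp add: pos_diag_def)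

definition "Dinv = dmat n (\<lambda>i. 1 / D $$ (i,i))"
definition "Pm = transpose_mat Q * Dinv * Q"

lemma DinvC[simp]: "Dinv \<in> carrier_mat n n" by (simp add: Dinv_def)
lemma dims[simp]: "dim_row L = n" "dim_col L = n" "dim_row D = n" "dim_col D = n"
  "dim_row Q = n" "dim_col Q = n" "dim_row Dinv = n" "dim_col Dinv = n"
  using LCe DCe QC DinvC by (auto simp del: LCe DCe QC DinvC)
lemma PC[simp]: "Pm \<in> carrier_mat n n" unfolding Pm_def by (intro mm_carrier) auto

lemma Pdims[simp]: "dim_row Pm = n" "dim_col Pm = n"
  using PC by (auto simp del: PC)

lemma DDinv: "D * Dinv = 1\<^sub>m n"
proof (rule eq_matI)
  fix i j assume "i < dim_row (1\<^sub>m n)" "j < dim_col (1\<^sub>m n)"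
  then have ij: "i < n" "j < n" by auto
  have "(D * Dinv) $$ (i,j) = D $$ (i,i) * Dinv $$ (i,j)"
    by (rule diag_left_index[of _ n]) (use ij Doff in auto)
  then show "(D * Dinv) $$ (i,j) = 1\<^sub>m n $$ (i,j)"
    using ij Dp[of i] by (auto simp: Dinv_def dmat_index)
qed auto

lemma tLtQ: "transpose_mat L * transpose_mat Q = 1\<^sub>m n"
  using transpose_mult[of Q n n L n] QL by simp
lemma tQtL: "transpose_mat Q * transpose_mat L = 1\<^sub>m n"
  using transpose_mult[of L n n Q n] LQ by simp

lemmas mmn = mm_assoc[where n = n] mm_carrier[where n = n] ma_carrier[where n = n] mm_distL[where n = n]
  mm_distR[where n = n] ma_assoc[where n = n] mm_one_r[where n = n] mm_one_l[where n = n]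

lemmas canc = cancel2[OF LCe QC _ LQ] cancel2[OF QC LCe _ QL] cancel2[OF DCe DinvC _ DDinv]
  cancel2[of "transpose_mat L" n "transpose_mat Q", OF _ _ _ tLtQ]
  cancel2[of "transpose_mat Q" n "transpose_mat L", OF _ _ _ tQtL]
  LQ QL DDinv tLtQ tQtL

lemma XP: "L * D * transpose_mat L * Pm = 1\<^sub>m n"
  unfolding Pm_def by (simp add: mmn canc)

lemma PX: "Pm * (L * D * transpose_mat L) = 1\<^sub>m n"
  by (rule mat_mult_left_right_inverse[OF _ _ XP]) auto

lemma Pinv: "mat_inv n (L * D * transpose_mat L) = Pm"
  unfolding mat_inv_def
proof (rule the_equality)
  show "Pm \<in> carrier_mat n n \<and> L * D * transpose_mat L * Pm = 1\<^sub>m n \<and> Pm * (L * D * transpose_mat L) = 1\<^sub>m n"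
    using XP PX by simp
next
  fix B assume B: "B \<in> carrier_mat n n \<and> L * D * transpose_mat L * B = 1\<^sub>m n \<and> B * (L * D * transpose_mat L) = 1\<^sub>m n"
  have Bc: "B \<in> carrier_mat n n" using B by simp
  have "B = B * (L * D * transpose_mat L * Pm)" using XP right_mult_one_mat[OF Bc] by simp
  also have "\<dots> = (B * (L * D * transpose_mat L)) * Pm"
    using Bc by (simp add: mmn)
  also have "\<dots> = Pm" using B by simp
  finally show "B = Pm" .
qed

lemma trace_red:
  assumes KY[simp]: "KY \<in> carrier_mat n n" and KZ[simp]: "KZ \<in> carrier_mat n n"
  shows "mtrace (Pm * (L * KY * transpose_mat L) * Pm * (L * KZ * transpose_mat L))
      = mtrace (Dinv * (KY * (Dinv * KZ)))"
proof -
  have "Pm * (L * KY * transpose_mat L) * Pm * (L * KZ * transpose_mat L)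
     = transpose_mat Q * (Dinv * (KY * (Dinv * (KZ * transpose_mat L))))"
    unfolding Pm_def by (simp add: mmn canc)
  then have "mtrace (Pm * (L * KY * transpose_mat L) * Pm * (L * KZ * transpose_mat L))
      = mtrace ((Dinv * (KY * (Dinv * (KZ * transpose_mat L)))) * transpose_mat Q)"
    using mtrace_comm[of "transpose_mat Q" n n "Dinv * (KY * (Dinv * (KZ * transpose_mat L)))"]
    by (simp add: mmn)
  also have "(Dinv * (KY * (Dinv * (KZ * transpose_mat L)))) * transpose_mat Q = Dinv * (KY * (Dinv * KZ))"
    by (simp add: mmn canc)
  finally show ?thesis .
qed


definition "Kof lp dp = Q * fmat n lp * D + dmat n dp + D * (transpose_mat (fmat n lp) * transpose_mat Q)"

lemma KofC[simp]: "Kof lp dp \<in> carrier_mat n n"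
  unfolding Kof_def by (simp add: mmn)

lemma Y_split:
  assumes YC: "Y \<in> carrier_mat n n"
    and Yf: "\<And>i j. i < n \<Longrightarrow> j < n \<Longrightarrow> Y $$ (i,j) = (\<Sum>k<n. lp i k * D $$ (k,k) * L $$ (j,k)
      + L $$ (i,k) * dp k * L $$ (j,k) + L $$ (i,k) * D $$ (k,k) * lp j k)"
  shows "Y = L * Kof lp dp * transpose_mat L"
proof -
  have Ddiag: "\<And>i j. i < n \<Longrightarrow> j < n \<Longrightarrow> i \<noteq> j \<Longrightarrow> dmat n dp $$ (i,j) = 0"
    by (simp add: dmat_index)
  have "Y = fmat n lp * D * transpose_mat L + L * dmat n dp * transpose_mat L + L * D * transpose_mat (fmat n lp)"
  proof (rule eq_matI)
    fix i j assume "i < dim_row (fmat n lp * D * transpose_mat L + L * dmat n dp * transpose_mat L + L * D * transpose_mat (fmat n lp))"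
      "j < dim_col (fmat n lp * D * transpose_mat L + L * dmat n dp * transpose_mat L + L * D * transpose_mat (fmat n lp))"
    then have ij: "i < n" "j < n" by auto
    have e1: "(fmat n lp * D * transpose_mat L) $$ (i,j) = (\<Sum>k<n. lp i k * D $$ (k,k) * L $$ (j,k))"
      using adbt_index[of "fmat n lp" n L D i j] ij Doff by simp
    have e2: "(L * dmat n dp * transpose_mat L) $$ (i,j) = (\<Sum>k<n. L $$ (i,k) * dp k * L $$ (j,k))"
      using adbt_index[of L n L "dmat n dp" i j] ij Ddiag by (simp add: dmat_index)
    have e3: "(L * D * transpose_mat (fmat n lp)) $$ (i,j) = (\<Sum>k<n. L $$ (i,k) * D $$ (k,k) * lp j k)"
      using adbt_index[of L n "fmat n lp" D i j] ij Doff by simp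
    show "Y $$ (i,j) = (fmat n lp * D * transpose_mat L + L * dmat n dp * transpose_mat L + L * D * transpose_mat (fmat n lp)) $$ (i,j)"
      using ij e1 e2 e3 Yf[OF ij] by (simp add: sum.distrib)
  qed (use YC in auto)
  also have "\<dots> = L * Kof lp dp * transpose_mat L"
    unfolding Kof_def by (simp add: mmn canc)
  finally show ?thesis .
qed

lemma M_lower:
  assumes lp0: "\<And>i j. i < n \<Longrightarrow> j < n \<Longrightarrow> i \<le> j \<Longrightarrow> lp i j = 0"
    and ij: "i < n" "j < n" "i \<le> j"
  shows "(Q * fmat n lp) $$ (i,j) = 0"
proof -
  have "(Q * fmat n lp) $$ (i,j) = (\<Sum>k<n. Q $$ (i,k) * lp k j)"
    using ij by (simp add: scalar_prod_def atLeast0LessThan)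
  also have "\<dots> = 0"
  proof (rule sum.neutral, rule ballI)
    fix k assume k: "k \<in> {..<n}"
    show "Q $$ (i,k) * lp k j = 0"
    proof (cases "i < k")
      case True
      then show ?thesis using Q_lower[OF Lu QC LQ True] k by simp
    next
      case False
      then show ?thesis using lp0[of k j] k ij by simp
    qed
  qed
  finally show ?thesis .
qed

lemma K_index:
  assumes ij: "i < n" "j < n"
  shows "Kof lp dp $$ (i,j) = (Q * fmat n lp) $$ (i,j) * D $$ (j,j) + (if i = j then dp i else 0)
     + D $$ (i,i) * (Q * fmat n lp) $$ (j,i)"
proof -
  have "(Q * fmat n lp * D) $$ (i,j) = (Q * fmat n lp) $$ (i,j) * D $$ (j,j)"
    by (rule diag_right_index[of _ n]) (use ij Doff in \<open>auto simp: mmn\<close>)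
  moreover have "(D * (transpose_mat (fmat n lp) * transpose_mat Q)) $$ (i,j)
      = D $$ (i,i) * (transpose_mat (fmat n lp) * transpose_mat Q) $$ (i,j)"
    by (rule diag_left_index[of _ n]) (use ij Doff in \<open>auto simp: mmn\<close>)
  moreover have "transpose_mat (fmat n lp) * transpose_mat Q = transpose_mat (Q * fmat n lp)"
    using transpose_mult[of Q n n "fmat n lp" n] by simp
  ultimately show ?thesis using ij unfolding Kof_def by (simp add: dmat_index)
qed

lemma P_index:
  assumes ab: "a < n" "b < n"
  shows "Pm $$ (a,b) = (\<Sum>k<n. Q $$ (k,a) * Q $$ (k,b) / D $$ (k,k))"
proof -
  have "Pm = transpose_mat Q * Dinv * transpose_mat (transpose_mat Q)" by (simp add: Pm_def)
  also have "\<dots> $$ (a,b) = (\<Sum>k<n. transpose_mat Q $$ (a,k) * Dinv $$ (k,k) * transpose_mat Q $$ (b,k))"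
    by (rule adbt_index) (use ab in \<open>auto simp: Dinv_def dmat_index\<close>)
  also have "\<dots> = (\<Sum>k<n. Q $$ (k,a) * Q $$ (k,b) / D $$ (k,k))"
    by (rule sum.cong) (use ab in \<open>auto simp: Dinv_def dmat_index\<close>)
  finally show ?thesis .
qed

lemma trace_index:
  assumes KY[simp]: "KY \<in> carrier_mat n n" and KZ[simp]: "KZ \<in> carrier_mat n n"
  shows "mtrace (Dinv * (KY * (Dinv * KZ))) = (\<Sum>i<n. \<Sum>j<n. KY $$ (i,j) * KZ $$ (j,i) / (D $$ (i,i) * D $$ (j,j)))"
proof -
  have Dinvd: "\<And>i j. i < n \<Longrightarrow> j < n \<Longrightarrow> i \<noteq> j \<Longrightarrow> Dinv $$ (i,j) = 0"
    by (simp add: Dinv_def dmat_index)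
  have "mtrace (Dinv * (KY * (Dinv * KZ))) = (\<Sum>i<n. (Dinv * (KY * (Dinv * KZ))) $$ (i,i))"
    by (simp add: mtrace_def mmn)
  also have "\<dots> = (\<Sum>i<n. \<Sum>j<n. KY $$ (i,j) * KZ $$ (j,i) / (D $$ (i,i) * D $$ (j,j)))"
  proof (rule sum.cong)
    fix i assume i: "i \<in> {..<n}"
    have "(Dinv * (KY * (Dinv * KZ))) $$ (i,i) = Dinv $$ (i,i) * (KY * (Dinv * KZ)) $$ (i,i)"
      by (rule diag_left_index[of _ n]) (use i Dinvd in \<open>auto simp: mmn\<close>)
    also have "(KY * (Dinv * KZ)) $$ (i,i) = (\<Sum>j<n. KY $$ (i,j) * (Dinv * KZ) $$ (j,i))"
      using i carrier_matD[OF KY] carrier_matD[OF KZ] by (simp add: scalar_prod_def atLeast0LessThan mmn)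
    also have "\<dots> = (\<Sum>j<n. KY $$ (i,j) * (Dinv $$ (j,j) * KZ $$ (j,i)))"
      by (rule sum.cong) (use i Dinvd diag_left_index[of KZ n Dinv] in auto)
    finally show "(Dinv * (KY * (Dinv * KZ))) $$ (i,i) = (\<Sum>j<n. KY $$ (i,j) * KZ $$ (j,i) / (D $$ (i,i) * D $$ (j,j)))"
      using i by (simp add: Dinv_def dmat_index sum_distrib_left)
  qed simp
  finally show ?thesis .
qed


lemma inner_P:
  assumes j: "j < n"
  shows "(\<Sum>i<n. (Q * fmat n lp) $$ (i,j) * (Q * fmat n lq) $$ (i,j) / D $$ (i,i))
       = (\<Sum>a<n. \<Sum>b<n. lp a j * Pm $$ (a,b) * lq b j)"
proof -
  have ME: "(Q * fmat n f) $$ (i,j) = (\<Sum>a<n. Q $$ (i,a) * f a j)" if "i < n" for i f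
    using that j by (simp add: scalar_prod_def atLeast0LessThan)
  have "(\<Sum>i<n. (Q * fmat n lp) $$ (i,j) * (Q * fmat n lq) $$ (i,j) / D $$ (i,i))
     = (\<Sum>i<n. \<Sum>a<n. \<Sum>b<n. lp a j * (Q $$ (i,a) * Q $$ (i,b) / D $$ (i,i)) * lq b j)"
  proof (rule sum.cong[OF refl])
    fix i assume i: "i \<in> {..<n}"
    have "(Q * fmat n lp) $$ (i,j) * (Q * fmat n lq) $$ (i,j) / D $$ (i,i)
       = (\<Sum>a<n. \<Sum>b<n. Q $$ (i,a) * lp a j * (Q $$ (i,b) * lq b j) / D $$ (i,i))"
      using i by (simp add: ME sum_product sum_divide_distrib)
    also have "\<dots> = (\<Sum>a<n. \<Sum>b<n. lp a j * (Q $$ (i,a) * Q $$ (i,b) / D $$ (i,i)) * lq b j)"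
      by (intro sum.cong refl) (simp add: algebra_simps)
    finally show "(Q * fmat n lp) $$ (i,j) * (Q * fmat n lq) $$ (i,j) / D $$ (i,i)
       = (\<Sum>a<n. \<Sum>b<n. lp a j * (Q $$ (i,a) * Q $$ (i,b) / D $$ (i,i)) * lq b j)" .
  qed
  also have "\<dots> = (\<Sum>a<n. \<Sum>i<n. \<Sum>b<n. lp a j * (Q $$ (i,a) * Q $$ (i,b) / D $$ (i,i)) * lq b j)"
    by (rule sum.swap)
  also have "\<dots> = (\<Sum>a<n. \<Sum>b<n. \<Sum>i<n. lp a j * (Q $$ (i,a) * Q $$ (i,b) / D $$ (i,i)) * lq b j)"
    by (rule sum.cong[OF refl], rule sum.swap)
  also have "\<dots> = (\<Sum>a<n. \<Sum>b<n. lp a j * Pm $$ (a,b) * lq b j)"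
  proof (intro sum.cong refl)
    fix a b assume a: "a \<in> {..<n}" and b: "b \<in> {..<n}"
    show "(\<Sum>i<n. lp a j * (Q $$ (i,a) * Q $$ (i,b) / D $$ (i,i)) * lq b j) = lp a j * Pm $$ (a,b) * lq b j"
      using a b by (simp add: P_index sum_distrib_left sum_distrib_right)
  qed
  finally show ?thesis .
qed

lemma alg_main:
  assumes YC: "Y \<in> carrier_mat n n"
    and Yf: "\<And>i j. i < n \<Longrightarrow> j < n \<Longrightarrow> Y $$ (i,j) = (\<Sum>k<n. lp i k * D $$ (k,k) * L $$ (j,k)
      + L $$ (i,k) * dp k * L $$ (j,k) + L $$ (i,k) * D $$ (k,k) * lp j k)"
    and lp0: "\<And>i j. i < n \<Longrightarrow> j < n \<Longrightarrow> i \<le> j \<Longrightarrow> lp i j = 0"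
    and ZC: "Z \<in> carrier_mat n n"
    and Zf: "\<And>i j. i < n \<Longrightarrow> j < n \<Longrightarrow> Z $$ (i,j) = (\<Sum>k<n. lq i k * D $$ (k,k) * L $$ (j,k)
      + L $$ (i,k) * dq k * L $$ (j,k) + L $$ (i,k) * D $$ (k,k) * lq j k)"
    and lq0: "\<And>i j. i < n \<Longrightarrow> j < n \<Longrightarrow> i \<le> j \<Longrightarrow> lq i j = 0"
  shows "mtrace (Pm * Y * Pm * Z) = (\<Sum>j<n. dp j * dq j / (D $$ (j,j) * D $$ (j,j))
      + 2 * D $$ (j,j) * (\<Sum>a<n. \<Sum>b<n. lp a j * Pm $$ (a,b) * lq b j))"
proof -
  define MY where "MY i j = (Q * fmat n lp) $$ (i,j)" for i j
  define MZ where "MZ i j = (Q * fmat n lq) $$ (i,j)" for i j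
  define h2 where "h2 i j = MY i j * MZ i j * D $$ (j,j) / D $$ (i,i)" for i j
  define h1 where "h1 i j = (if i = j then dp i * dq i / (D $$ (i,i) * D $$ (i,i)) else 0)" for i j
  have "mtrace (Pm * Y * Pm * Z) = mtrace (Pm * (L * Kof lp dp * transpose_mat L) * Pm * (L * Kof lq dq * transpose_mat L))"
    using Y_split[OF YC Yf] Y_split[OF ZC Zf] by simp
  also have "\<dots> = mtrace (Dinv * (Kof lp dp * (Dinv * Kof lq dq)))"
    by (rule trace_red) simp_all
  also have "\<dots> = (\<Sum>i<n. \<Sum>j<n. Kof lp dp $$ (i,j) * Kof lq dq $$ (j,i) / (D $$ (i,i) * D $$ (j,j)))"
    by (rule trace_index) simp_all
  also have "\<dots> = (\<Sum>i<n. \<Sum>j<n. h1 i j + h2 i j + h2 j i)"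
  proof (intro sum.cong refl)
    fix i j assume i: "i \<in> {..<n}" and j: "j \<in> {..<n}"
    then have i': "i < n" and j': "j < n" by auto
    have Di: "D $$ (i,i) > 0" and Dj: "D $$ (j,j) > 0" using Dp i' j' by auto
    have KY: "Kof lp dp $$ (i,j) = MY i j * D $$ (j,j) + (if i = j then dp i else 0) + D $$ (i,i) * MY j i"
      using K_index[OF i' j'] by (simp add: MY_def)
    have KZ: "Kof lq dq $$ (j,i) = MZ j i * D $$ (i,i) + (if j = i then dq j else 0) + D $$ (j,j) * MZ i j"
      using K_index[OF j' i'] by (simp add: MZ_def)
    consider "i < j" | "i = j" | "j < i" by linarith
    then show "Kof lp dp $$ (i,j) * Kof lq dq $$ (j,i) / (D $$ (i,i) * D $$ (j,j)) = h1 i j + h2 i j + h2 j i"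
    proof cases
      case 1
      have "MY i j = 0" "MZ i j = 0" using M_lower[OF lp0 i' j'] M_lower[OF lq0 i' j'] 1
        by (auto simp: MY_def MZ_def)
      then show ?thesis using 1 Di Dj unfolding KY KZ h1_def h2_def
        by (simp add: field_simps power2_eq_square)
    next
      case 2
      have "MY i j = 0" "MZ i j = 0" using M_lower[OF lp0 i' j'] M_lower[OF lq0 i' j'] 2
        by (auto simp: MY_def MZ_def)
      then show ?thesis using 2 Di Dj unfolding KY KZ h1_def h2_def
        by (simp add: field_simps)
    next
      case 3
      have "MY j i = 0" "MZ j i = 0" using M_lower[OF lp0 j' i'] M_lower[OF lq0 j' i'] 3
        by (auto simp: MY_def MZ_def)
      then show ?thesis using 3 Di Dj unfolding KY KZ h1_def h2_def
        by (simp add: field_simps power2_eq_square)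
    qed
  qed
  also have "\<dots> = (\<Sum>i<n. \<Sum>j<n. h1 i j) + (\<Sum>i<n. \<Sum>j<n. h2 i j) + (\<Sum>i<n. \<Sum>j<n. h2 j i)"
    by (simp add: sum.distrib)
  also have "(\<Sum>i<n. \<Sum>j<n. h2 j i) = (\<Sum>i<n. \<Sum>j<n. h2 i j)"
    by (rule sum.swap)
  also have "(\<Sum>i<n. \<Sum>j<n. h1 i j) = (\<Sum>j<n. dp j * dq j / (D $$ (j,j) * D $$ (j,j)))"
    by (intro sum.cong refl) (simp add: h1_def)
  also have "(\<Sum>i<n. \<Sum>j<n. h2 i j) = (\<Sum>j<n. D $$ (j,j) * (\<Sum>a<n. \<Sum>b<n. lp a j * Pm $$ (a,b) * lq b j))"
  proof -
    have "(\<Sum>i<n. \<Sum>j<n. h2 i j) = (\<Sum>j<n. \<Sum>i<n. h2 i j)" by (rule sum.swap)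
    also have "\<dots> = (\<Sum>j<n. D $$ (j,j) * (\<Sum>i<n. MY i j * MZ i j / D $$ (i,i)))"
      by (intro sum.cong refl) (simp add: h2_def sum_distrib_left algebra_simps)
    also have "\<dots> = (\<Sum>j<n. D $$ (j,j) * (\<Sum>a<n. \<Sum>b<n. lp a j * Pm $$ (a,b) * lq b j))"
    proof (rule sum.cong[OF refl])
      fix j assume "j \<in> {..<n}"
      then show "D $$ (j,j) * (\<Sum>i<n. MY i j * MZ i j / D $$ (i,i)) = D $$ (j,j) * (\<Sum>a<n. \<Sum>b<n. lp a j * Pm $$ (a,b) * lq b j)"
        using inner_P[of j lp lq] by (simp add: MY_def MZ_def)
    qed
    finally show ?thesis .
  qed
  finally show ?thesis
    by (simp add: sum.distrib sum_distrib_left algebra_simps)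
qed

lemma alg_main2:
  assumes YC: "Y \<in> carrier_mat n n"
    and Yf: "\<And>i j. i < n \<Longrightarrow> j < n \<Longrightarrow> Y $$ (i,j) = (\<Sum>k<n. lp i k * D $$ (k,k) * L $$ (j,k)
      + L $$ (i,k) * dp k * L $$ (j,k) + L $$ (i,k) * D $$ (k,k) * lp j k)"
    and lp0: "\<And>i j. i < n \<Longrightarrow> j < n \<Longrightarrow> i \<le> j \<Longrightarrow> lp i j = 0"
    and ZC: "Z \<in> carrier_mat n n"
    and Zf: "\<And>i j. i < n \<Longrightarrow> j < n \<Longrightarrow> Z $$ (i,j) = (\<Sum>k<n. lq i k * D $$ (k,k) * L $$ (j,k)
      + L $$ (i,k) * dq k * L $$ (j,k) + L $$ (i,k) * D $$ (k,k) * lq j k)"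
    and lq0: "\<And>i j. i < n \<Longrightarrow> j < n \<Longrightarrow> i \<le> j \<Longrightarrow> lq i j = 0"
  shows "mtrace (mat_inv n (L * D * transpose_mat L) * Y * mat_inv n (L * D * transpose_mat L) * Z)
      = (\<Sum>j<n. dp j * dq j / (D $$ (j,j) * D $$ (j,j))
      + 2 * D $$ (j,j) * (\<Sum>a<n. \<Sum>b<n. lp a j * mat_inv n (L * D * transpose_mat L) $$ (a,b) * lq b j))"
  using alg_main[OF assms] Pinv by simp

end

lemma idx_in: "finite I \<Longrightarrow> a < card I \<Longrightarrow> idx I a \<in> I"
  unfolding idx_def by (metis length_sorted_list_of_set nth_mem set_sorted_list_of_set)

lemma pos_idx:
  assumes fin: "finite I" and a: "a < card I"
  shows "pos I (idx I a) = a"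
proof -
  define xs where "xs = sorted_list_of_set I"
  have st: "sorted_wrt (<) xs" unfolding xs_def by (rule strict_sorted_list_of_set)
  have len: "length xs = card I" unfolding xs_def by simp
  have set: "set xs = I" unfolding xs_def using fin by simp
  have dist: "distinct xs" unfolding xs_def by simp
  have "{k \<in> I. k < xs ! a} = (\<lambda>b. xs ! b) ` {..<a}"
  proof
    show "{k \<in> I. k < xs ! a} \<subseteq> (\<lambda>b. xs ! b) ` {..<a}"
    proof
      fix k assume k: "k \<in> {k \<in> I. k < xs ! a}"
      then obtain b where b: "b < length xs" "k = xs ! b" using set by (auto simp: in_set_conv_nth)
      have "b < a"
      proof (rule ccontr)
        assume "\<not> b < a"
        then have "b = a \<or> a < b" by auto
        then have "xs ! a \<le> xs ! b" using sorted_wrt_nth_less[OF st, of a b] b by auto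
        then show False using k b by auto
      qed
      then show "k \<in> (\<lambda>b. xs ! b) ` {..<a}" using b by auto
    qed
  next
    show "(\<lambda>b. xs ! b) ` {..<a} \<subseteq> {k \<in> I. k < xs ! a}"
      using sorted_wrt_nth_less[OF st] a len set by auto
  qed
  moreover have "inj_on (\<lambda>b. xs ! b) {..<a}"
    using dist a len by (auto simp: inj_on_def nth_eq_iff_index_eq)
  ultimately have "card {k \<in> I. k < xs ! a} = a" by (simp add: card_image)
  then show ?thesis unfolding pos_def idx_def xs_def by simp
qed

lemma sum_I:
  assumes fin: "finite I"
  shows "(\<Sum>i\<in>I. h i) = (\<Sum>a<card I. h (idx I a))"
proof -
  define xs where "xs = sorted_list_of_set I"
  have len: "length xs = card I" unfolding xs_def by simp
  have set: "set xs = I" unfolding xs_def using fin by simp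
  have dist: "distinct xs" unfolding xs_def by simp
  have inj: "inj_on (idx I) {..<card I}"
    using dist len by (auto simp: inj_on_def nth_eq_iff_index_eq idx_def xs_def[symmetric])
  have img: "idx I ` {..<card I} = I"
  proof -
    have "idx I ` {..<card I} = set xs" using len
      by (auto simp: idx_def xs_def[symmetric] in_set_conv_nth)
    then show ?thesis using set by simp
  qed
  show ?thesis using sum.reindex[OF inj, of h] img by simp
qed


lemma wcol_entry:
  assumes Rc: "R j \<in> carrier_mat (card (Iset V j)) (card (Iset V j))" and a: "a < card (Iset V j)"
  shows "Wcol n V X D R Y j $ a = sqrt (D $$ (j,j)) *
     (\<Sum>b<card (Iset V j). R j $$ (b,a) * dL n X Y (idx (Iset V j) b) j)"
  using Rc a by (simp add: Wcol_def scalar_prod_def atLeast0LessThan)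

lemma wcol_inner:
  fixes j n :: nat and V :: "(nat \<times> nat) set" and X D S Y Z :: "real mat" and R :: "nat \<Rightarrow> real mat"
  defines "I \<equiv> Iset V j"
  assumes Rc: "R j \<in> carrier_mat (card I) (card I)"
    and RR: "submat S I = R j * transpose_mat (R j)"
    and Dj: "D $$ (j,j) \<ge> 0"
  shows "(\<Sum>a<card I. Wcol n V X D R Y j $ a * Wcol n V X D R Z j $ a)
    = D $$ (j,j) * (\<Sum>b<card I. \<Sum>c<card I. dL n X Y (idx I b) j * S $$ (idx I b, idx I c) * dL n X Z (idx I c) j)"
proof -
  let ?c = "card I"
  let ?fY = "\<lambda>b. dL n X Y (idx I b) j" and ?fZ = "\<lambda>b. dL n X Z (idx I b) j"
  have RRe: "S $$ (idx I b, idx I c) = (\<Sum>a<?c. R j $$ (b,a) * R j $$ (c,a))"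
    if "b < ?c" "c < ?c" for b c
  proof -
    have "S $$ (idx I b, idx I c) = submat S I $$ (b,c)" using that by (simp add: submat_def)
    also have "\<dots> = (R j * transpose_mat (R j)) $$ (b,c)" using RR by simp
    also have "\<dots> = (\<Sum>a<?c. R j $$ (b,a) * R j $$ (c,a))"
      using Rc that by (simp add: scalar_prod_def atLeast0LessThan)
    finally show ?thesis .
  qed
  have "(\<Sum>a<?c. Wcol n V X D R Y j $ a * Wcol n V X D R Z j $ a)
     = (\<Sum>a<?c. (sqrt (D $$ (j,j)) * (\<Sum>b<?c. R j $$ (b,a) * ?fY b)) * (sqrt (D $$ (j,j)) * (\<Sum>c<?c. R j $$ (c,a) * ?fZ c)))"
    using wcol_entry[where R=R and V=V and j=j] Rc unfolding I_def by simp
  also have "\<dots> = (\<Sum>a<?c. D $$ (j,j) * ((\<Sum>b<?c. R j $$ (b,a) * ?fY b) * (\<Sum>c<?c. R j $$ (c,a) * ?fZ c)))"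
    by (intro sum.cong refl) (use Dj in \<open>simp add: algebra_simps real_sqrt_mult[symmetric]\<close>)
  also have "\<dots> = D $$ (j,j) * (\<Sum>a<?c. \<Sum>b<?c. \<Sum>c<?c. ?fY b * ?fZ c * (R j $$ (b,a) * R j $$ (c,a)))"
    unfolding sum_product by (simp add: sum_distrib_left mult_ac)
  also have "(\<Sum>a<?c. \<Sum>b<?c. \<Sum>c<?c. ?fY b * ?fZ c * (R j $$ (b,a) * R j $$ (c,a)))
      = (\<Sum>b<?c. \<Sum>a<?c. \<Sum>c<?c. ?fY b * ?fZ c * (R j $$ (b,a) * R j $$ (c,a)))"
    by (rule sum.swap)
  also have "\<dots> = (\<Sum>b<?c. \<Sum>c<?c. \<Sum>a<?c. ?fY b * ?fZ c * (R j $$ (b,a) * R j $$ (c,a)))"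
    by (rule sum.cong[OF refl], rule sum.swap)
  also have "\<dots> = (\<Sum>b<?c. \<Sum>c<?c. ?fY b * S $$ (idx I b, idx I c) * ?fZ c)"
  proof (intro sum.cong refl)
    fix b c assume b: "b \<in> {..<?c}" and c: "c \<in> {..<?c}"
    show "(\<Sum>a<?c. ?fY b * ?fZ c * (R j $$ (b,a) * R j $$ (c,a))) = ?fY b * S $$ (idx I b, idx I c) * ?fZ c"
      using b c by (simp add: RRe sum_distrib_left algebra_simps)
  qed
  finally show ?thesis .
qed


lemma Iset_sub: "sparsity_pattern n V \<Longrightarrow> Iset V j \<subseteq> {..<n}"
  unfolding sparsity_pattern_def Iset_def by auto

lemma Iset_fin: "sparsity_pattern n V \<Longrightarrow> finite (Iset V j)"
  by (rule finite_subset[OF Iset_sub]) auto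

lemma S_eq_P:
  assumes sp: "sparsity_pattern n V" and fil: "filled V"
    and i: "i \<in> Iset V j" and k: "k \<in> Iset V j"
  shows "proj_SV n V P $$ (i,k) = P $$ (i,k)"
proof -
  have "i < n" "k < n" using Iset_sub[OF sp] i k by auto
  moreover have "(max i k, min i k) \<in> V"
  proof (cases "i = k")
    case True
    then show ?thesis using sp \<open>i < n\<close> by (simp add: sparsity_pattern_def)
  next
    case False
    have ij: "j < i" "(i,j) \<in> V" "j < k" "(k,j) \<in> V" using i k by (auto simp: Iset_def)
    show ?thesis
    proof (cases "k < i")
      case True
      then have "(i,k) \<in> V" using fil[unfolded filled_def, rule_format, of k i j] ij by blast
      then show ?thesis using True by (simp add: max_def min_def)
    next
      case False
      then have ki: "i < k" using \<open>i \<noteq> k\<close> by auto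
      then have "(k,i) \<in> V" using fil[unfolded filled_def, rule_format, of i k j] ij by blast
      then show ?thesis using ki by (simp add: max_def min_def)
    qed
  qed
  ultimately show ?thesis by (simp add: proj_SV_def)
qed

lemma rhs:
  fixes n :: nat and V :: "(nat \<times> nat) set" and X D S P Y Z :: "real mat" and R :: "nat \<Rightarrow> real mat"
  assumes sp: "sparsity_pattern n V" and fil: "filled V"
    and Rp: "\<forall>j<n. Iset V j \<noteq> {} \<longrightarrow>
           R j \<in> carrier_mat (card (Iset V j)) (card (Iset V j)) \<and> upper_triangular (R j) \<and>
           submat S (Iset V j) = R j * transpose_mat (R j)"
    and S: "S = proj_SV n V P"
    and Dpos: "\<And>j. j < n \<Longrightarrow> D $$ (j,j) > 0"
    and zY: "\<And>i j. i < n \<Longrightarrow> j < n \<Longrightarrow> \<not> (j < i \<and> (i,j) \<in> V) \<Longrightarrow> dL n X Y i j = 0"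
    and zZ: "\<And>i j. i < n \<Longrightarrow> j < n \<Longrightarrow> \<not> (j < i \<and> (i,j) \<in> V) \<Longrightarrow> dL n X Z i j = 0"
  shows "mtrace (Rmap n V X D R Y * Rmap n V X D R Z) = (\<Sum>j<n. dD n X Y j * dD n X Z j / (D $$ (j,j) * D $$ (j,j))
      + 2 * D $$ (j,j) * (\<Sum>a<n. \<Sum>b<n. dL n X Y a j * P $$ (a,b) * dL n X Z b j))"
proof -
  define wY where "wY j = Wcol n V X D R Y j" for j
  define wZ where "wZ j = Wcol n V X D R Z j" for j
  define g2 where "g2 i j = (if j < i \<and> i \<in> Iset V j then wY j $ pos (Iset V j) i * wZ j $ pos (Iset V j) i else 0)" for i j
  define h1 where "h1 i j = (if i = j then dD n X Y j / D $$ (j,j) * (dD n X Z j / D $$ (j,j)) else 0)" for i j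
  have "mtrace (Rmap n V X D R Y * Rmap n V X D R Z) = (\<Sum>i<n. \<Sum>j<n. Rmap n V X D R Y $$ (i,j) * Rmap n V X D R Z $$ (j,i))"
    by (simp add: mtrace_def Rmap_def scalar_prod_def atLeast0LessThan)
  also have "\<dots> = (\<Sum>i<n. \<Sum>j<n. h1 i j + g2 i j + g2 j i)"
  proof (intro sum.cong refl)
    fix i j assume "i \<in> {..<n}" "j \<in> {..<n}"
    then show "Rmap n V X D R Y $$ (i,j) * Rmap n V X D R Z $$ (j,i) = h1 i j + g2 i j + g2 j i"
      by (auto simp: Rmap_def h1_def g2_def wY_def wZ_def)
  qed
  also have "\<dots> = (\<Sum>i<n. \<Sum>j<n. h1 i j) + (\<Sum>i<n. \<Sum>j<n. g2 i j) + (\<Sum>i<n. \<Sum>j<n. g2 j i)"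
    by (simp add: sum.distrib)
  also have "(\<Sum>i<n. \<Sum>j<n. g2 j i) = (\<Sum>i<n. \<Sum>j<n. g2 i j)" by (rule sum.swap)
  also have "(\<Sum>i<n. \<Sum>j<n. g2 i j) = (\<Sum>j<n. \<Sum>i<n. g2 i j)" by (rule sum.swap)
  also have "(\<Sum>i<n. \<Sum>j<n. h1 i j) = (\<Sum>j<n. dD n X Y j * dD n X Z j / (D $$ (j,j) * D $$ (j,j)))"
    by (intro sum.cong refl) (simp add: h1_def)
  also have "(\<Sum>j<n. \<Sum>i<n. g2 i j) = (\<Sum>j<n. D $$ (j,j) * (\<Sum>a<n. \<Sum>b<n. dL n X Y a j * P $$ (a,b) * dL n X Z b j))"
  proof (rule sum.cong[OF refl])
    fix j assume j: "j \<in> {..<n}"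
    define I where "I = Iset V j"
    have fin: "finite I" and sub: "I \<subseteq> {..<n}" using Iset_fin[OF sp] Iset_sub[OF sp] by (auto simp: I_def)
    have "(\<Sum>i<n. g2 i j) = (\<Sum>i<n. if i \<in> I then wY j $ pos I i * wZ j $ pos I i else 0)"
      by (intro sum.cong refl) (auto simp: g2_def I_def Iset_def)
    also have "\<dots> = (\<Sum>i\<in>I. wY j $ pos I i * wZ j $ pos I i)"
    proof -
      have "{..<n} \<inter> I = I" using sub by auto
      then show ?thesis
        using sum.inter_restrict[of "{..<n}" "\<lambda>i. wY j $ pos I i * wZ j $ pos I i" I] by simp
    qed
    also have "\<dots> = (\<Sum>a<card I. wY j $ a * wZ j $ a)"
    proof -
      have "(\<Sum>i\<in>I. wY j $ pos I i * wZ j $ pos I i) = (\<Sum>a<card I. wY j $ pos I (idx I a) * wZ j $ pos I (idx I a))"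
        by (rule sum_I[OF fin])
      also have "\<dots> = (\<Sum>a<card I. wY j $ a * wZ j $ a)"
        by (intro sum.cong refl) (simp add: pos_idx[OF fin])
      finally show ?thesis .
    qed
    finally have g2e: "(\<Sum>i<n. g2 i j) = (\<Sum>a<card I. wY j $ a * wZ j $ a)" .
    have ext: "(\<Sum>a<n. \<Sum>b<n. dL n X Y a j * P $$ (a,b) * dL n X Z b j)
          = (\<Sum>a\<in>I. \<Sum>b\<in>I. dL n X Y a j * P $$ (a,b) * dL n X Z b j)"
    proof -
      have z: "dL n X W a j = 0" if "a < n" "a \<notin> I" and
        zW: "\<And>i j. i < n \<Longrightarrow> j < n \<Longrightarrow> \<not> (j < i \<and> (i,j) \<in> V) \<Longrightarrow> dL n X W i j = 0" for a W
        using zW[of a j] that j by (auto simp: I_def Iset_def)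
      have "(\<Sum>a<n. \<Sum>b<n. dL n X Y a j * P $$ (a,b) * dL n X Z b j)
          = (\<Sum>a<n. \<Sum>b\<in>I. dL n X Y a j * P $$ (a,b) * dL n X Z b j)"
        by (intro sum.cong refl sum.mono_neutral_right) (use sub fin z[OF _ _ zZ] in auto)
      also have "\<dots> = (\<Sum>a\<in>I. \<Sum>b\<in>I. dL n X Y a j * P $$ (a,b) * dL n X Z b j)"
        by (intro sum.mono_neutral_right) (use sub fin z[OF _ _ zY] in auto)
      finally show ?thesis .
    qed
    show "(\<Sum>i<n. g2 i j) = D $$ (j,j) * (\<Sum>a<n. \<Sum>b<n. dL n X Y a j * P $$ (a,b) * dL n X Z b j)"
    proof (cases "I = {}")
      case True
      then show ?thesis using g2e ext by simp
    next
      case False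
      then have Rj: "R j \<in> carrier_mat (card I) (card I)" "submat S I = R j * transpose_mat (R j)"
        using Rp j by (auto simp: I_def)
      have "(\<Sum>a<card I. wY j $ a * wZ j $ a)
        = D $$ (j,j) * (\<Sum>b<card I. \<Sum>c<card I. dL n X Y (idx I b) j * S $$ (idx I b, idx I c) * dL n X Z (idx I c) j)"
        unfolding wY_def wZ_def I_def
        by (rule wcol_inner) (use Rj Dpos[of j] j in \<open>auto simp: I_def\<close>)
      also have "(\<Sum>b<card I. \<Sum>c<card I. dL n X Y (idx I b) j * S $$ (idx I b, idx I c) * dL n X Z (idx I c) j)
          = (\<Sum>a\<in>I. \<Sum>b\<in>I. dL n X Y a j * S $$ (a,b) * dL n X Z b j)"
        by (subst sum_I[OF fin], rule sum.cong[OF refl], subst sum_I[OF fin], rule refl)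
      also have "\<dots> = (\<Sum>a\<in>I. \<Sum>b\<in>I. dL n X Y a j * P $$ (a,b) * dL n X Z b j)"
        by (intro sum.cong refl) (use S_eq_P[OF sp fil] S in \<open>auto simp: I_def\<close>)
      finally show ?thesis using g2e ext by simp
    qed
  qed
  finally have tot: "mtrace (Rmap n V X D R Y * Rmap n V X D R Z) =
     (\<Sum>j<n. dD n X Y j * dD n X Z j / (D $$ (j,j) * D $$ (j,j)))
     + (\<Sum>j<n. D $$ (j,j) * (\<Sum>a<n. \<Sum>b<n. dL n X Y a j * P $$ (a,b) * dL n X Z b j))
     + (\<Sum>j<n. D $$ (j,j) * (\<Sum>a<n. \<Sum>b<n. dL n X Y a j * P $$ (a,b) * dL n X Z b j))" .
  have "(\<Sum>j<n. dD n X Y j * dD n X Z j / (D $$ (j,j) * D $$ (j,j))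
      + 2 * D $$ (j,j) * (\<Sum>a<n. \<Sum>b<n. dL n X Y a j * P $$ (a,b) * dL n X Z b j))
    = (\<Sum>j<n. dD n X Y j * dD n X Z j / (D $$ (j,j) * D $$ (j,j)))
     + 2 * (\<Sum>j<n. D $$ (j,j) * (\<Sum>a<n. \<Sum>b<n. dL n X Y a j * P $$ (a,b) * dL n X Z b j))"
    by (simp only: sum.distrib sum_distrib_left mult.assoc)
  then show ?thesis using tot by simp
qed

theorem mainTheorem7:
  fixes n :: nat and V :: "(nat \<times> nat) set" and X L D S Y Z :: "real mat"
    and R :: "nat \<Rightarrow> real mat"
  assumes "sparsity_pattern n V" and "filled V"
    and "in_SV n V X" and "pos_def n X"
    and "is_ldl n X L D"
    and "S = proj_SV n V (mat_inv n X)"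
    and "\<forall>j<n. Iset V j \<noteq> {} \<longrightarrow>
           R j \<in> carrier_mat (card (Iset V j)) (card (Iset V j)) \<and> upper_triangular (R j) \<and>
           submat S (Iset V j) = R j * transpose_mat (R j)"
    and "in_SV n V Y" and "in_SV n V Z"
  shows "mtrace (mat_inv n X * Y * mat_inv n X * Z) = mtrace (Rmap n V X D R Y * Rmap n V X D R Z)"
proof -
  note sp = assms(1) and fil = assms(2) and XV = assms(3) and ldl = assms(5) and S = assms(6)
    and Rp = assms(7) and YV = assms(8) and ZV = assms(9)
  have Lu: "unit_lower_tri n L" and Dd: "pos_diag n D" and Xe: "X = L * D * transpose_mat L"
    using ldl by (auto simp: is_ldl_def)
  obtain Q where QC: "Q \<in> carrier_mat n n" and LQ: "L * Q = 1\<^sub>m n" and QL: "Q * L = 1\<^sub>m n"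
    using inv_exists[OF Lu] by blast
  have YC: "Y \<in> carrier_mat n n" and ZC: "Z \<in> carrier_mat n n"
    using YV ZV by (auto simp: in_SV_def)
  have lhs: "mtrace (mat_inv n X * Y * mat_inv n X * Z) = (\<Sum>j<n. dD n X Y j * dD n X Z j / (D $$ (j,j) * D $$ (j,j))
      + 2 * D $$ (j,j) * (\<Sum>a<n. \<Sum>b<n. dL n X Y a j * mat_inv n X $$ (a,b) * dL n X Z b j))"
    unfolding Xe
  proof (rule alg_main2[OF Lu Dd QC LQ QL YC _ _ ZC])
    show "\<And>i j. i < n \<Longrightarrow> j < n \<Longrightarrow> Y $$ (i,j) = (\<Sum>k<n. dL n (L * D * transpose_mat L) Y i k * D $$ (k,k) * L $$ (j,k)
      + L $$ (i,k) * dD n (L * D * transpose_mat L) Y k * L $$ (j,k) + L $$ (i,k) * D $$ (k,k) * dL n (L * D * transpose_mat L) Y j k)"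
      using deriv_identity[OF fil XV YV ldl] Xe by simp
    show "\<And>i j. i < n \<Longrightarrow> j < n \<Longrightarrow> Z $$ (i,j) = (\<Sum>k<n. dL n (L * D * transpose_mat L) Z i k * D $$ (k,k) * L $$ (j,k)
      + L $$ (i,k) * dD n (L * D * transpose_mat L) Z k * L $$ (j,k) + L $$ (i,k) * D $$ (k,k) * dL n (L * D * transpose_mat L) Z j k)"
      using deriv_identity[OF fil XV ZV ldl] Xe by simp
    show "\<And>i j. i < n \<Longrightarrow> j < n \<Longrightarrow> i \<le> j \<Longrightarrow> dL n (L * D * transpose_mat L) Y i j = 0"
      using dL_zero[OF fil XV YV ldl] Xe by simp
    show "\<And>i j. i < n \<Longrightarrow> j < n \<Longrightarrow> i \<le> j \<Longrightarrow> dL n (L * D * transpose_mat L) Z i j = 0"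
      using dL_zero[OF fil XV ZV ldl] Xe by simp
  qed
  have rhs: "mtrace (Rmap n V X D R Y * Rmap n V X D R Z) = (\<Sum>j<n. dD n X Y j * dD n X Z j / (D $$ (j,j) * D $$ (j,j))
      + 2 * D $$ (j,j) * (\<Sum>a<n. \<Sum>b<n. dL n X Y a j * mat_inv n X $$ (a,b) * dL n X Z b j))"
  proof (rule rhs[OF sp fil Rp S])
    show "\<And>j. j < n \<Longrightarrow> D $$ (j,j) > 0" using Dd by (simp add: pos_diag_def)
    show "\<And>i j. i < n \<Longrightarrow> j < n \<Longrightarrow> \<not> (j < i \<and> (i,j) \<in> V) \<Longrightarrow> dL n X Y i j = 0"
      using dL_zero[OF fil XV YV ldl] by blast
    show "\<And>i j. i < n \<Longrightarrow> j < n \<Longrightarrow> \<not> (j < i \<and> (i,j) \<in> V) \<Longrightarrow> dL n X Z i j = 0"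
      using dL_zero[OF fil XV ZV ldl] by blast
  qed
  show ?thesis using lhs rhs by simp
qed

end
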